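(* The logic $\mathrm{LTL}[\mathsf{F}]$ can be exponentially more succinct than $\mathsf{F}(\mathrm{LTL}[\mathsf{Y},\mathsf{wY},\mathsf{O},\mathsf{H}])$ (over finite traces). That is, there exist finite sets of atomic propositions $AP_n$ and languages $\mathcal{L}_n\subseteq(2^{AP_n})^+$, $n\ge 1$, such that for every $n\ge1$: (i) there is $\phi\in\mathrm{LTL}[\mathsf{F}]$ with $\mathcal{L}(\phi)=\mathcal{L}_n$ and $\mathrm{size}(\phi)$ bounded by a polynomial in $n$; and (ii) every $\psi\in\mathsf{F}(\mathrm{LTL}[\mathsf{Y},\mathsf{wY},\mathsf{O},\mathsf{H}])$ with $\mathcal{L}(\psi)=\mathcal{L}_n$ has $\mathrm{size}(\psi)\in 2^{\Omega(n)}$.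
   Context: Let $AP$ be a finite set of atomic propositions and $\Sigma=2^{AP}$. Formulae (in negation normal form) are generated by $\phi ::= p \mid \neg p \mid \phi\lor\phi\mid\phi\land\phi\mid \mathsf{X}\phi\mid\mathsf{wX}\phi\mid\mathsf{F}\phi\mid\mathsf{G}\phi\mid\mathsf{Y}\phi\mid\mathsf{wY}\phi\mid\mathsf{O}\phi\mid\mathsf{H}\phi$ with $p\in AP$. For a finite non-empty trace $\sigma=w_0\cdots w_m\in\Sigma^+$ ($|\sigma|=m+1$, $\sigma[i]=w_i$) and $0\le i<|\sigma|$: $\sigma,i\models p$ iff $p\in\sigma[i]$; $\sigma,i\models\neg p$ iff $p\notin\sigma[i]$; $\lor,\land$ as usual; $\sigma,i\models\mathsf{X}\phi$ iff $i+1<|\sigma|$ and $\sigma,i+1\models\phi$; $\sigma,i\models\mathsf{wX}\phi$ iff $i+1=|\sigma|$ or $\sigma,i+1\models\phi$; $\sigma,i\models\mathsf{F}\phi$ iff $\sigma,j\models\phi$ for some $i\le j<|\sigma|$; $\sigma,i\models\mathsf{G}\phi$ iff $\sigma,j\models\phi$ for all $i\le j<|\sigma|$; $\sigma,i\models\mathsf{Y}\phi$ iff $i>0$ and $\sigma,i-1\models\phi$; $\sigma,i\models\mathsf{wY}\phi$ iff $i=0$ or $\sigma,i-1\models\phi$; $\sigma,i\models\mathsf{O}\phi$ iff $\sigma,j\models\phi$ for some $0\le j\le i$; $\sigma,i\models\mathsf{H}\phi$ iff $\sigma,j\models\phi$ for all $0\le j\le i$. $\sigma\models\phi$ means $\sigma,0\models\phi$;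 $\mathcal{L}(\phi)=\{\sigma\in\Sigma^+:\sigma\models\phi\}$. Size: literals have size 1, unary temporal operators add 1, $\mathrm{size}(\phi_1\circ\phi_2)=\mathrm{size}(\phi_1)+\mathrm{size}(\phi_2)+1$ for $\circ\in\{\land,\lor\}$. For a set $S$ of temporal operators, $\mathrm{LTL}[S]$ is the set of formulae whose temporal operators lie in $S$, and $\mathsf{F}(\mathrm{LTL}[S])$ is the set of formulae $\mathsf{F}(\alpha)$ with $\alpha\in\mathrm{LTL}[S]$. *)

theory Defs
  imports Complex_Main
begin

datatype ltl =
    Prop nat | NProp nat
  | Or ltl ltl | And ltl ltl
  | Nxt ltl | WNxt ltl | Fin ltl | Glob ltl
  | Yst ltl | WYst ltl | Once ltl | Hist ltl

datatype top = OpX | OpWX | OpF | OpG | OpY | OpWY | OpO | OpH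

fun sat :: "nat set list \<Rightarrow> nat \<Rightarrow> ltl \<Rightarrow> bool" where
  "sat \<sigma> i (Prop p) = (p \<in> \<sigma> ! i)"
| "sat \<sigma> i (NProp p) = (p \<notin> \<sigma> ! i)"
| "sat \<sigma> i (Or a b) = (sat \<sigma> i a \<or> sat \<sigma> i b)"
| "sat \<sigma> i (And a b) = (sat \<sigma> i a \<and> sat \<sigma> i b)"
| "sat \<sigma> i (Nxt a) = (i + 1 < length \<sigma> \<and> sat \<sigma> (i + 1) a)"
| "sat \<sigma> i (WNxt a) = (i + 1 = length \<sigma> \<or> sat \<sigma> (i + 1) a)"
| "sat \<sigma> i (Fin a) = (\<exists>j. i \<le> j \<and> j < length \<sigma> \<and> sat \<sigma> j a)"
| "sat \<sigma> i (Glob a) = (\<forall>j. i \<le> j \<and> j < length \<sigma> \<longrightarrow> sat \<sigma> j a)"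
| "sat \<sigma> i (Yst a) = (i > 0 \<and> sat \<sigma> (i - 1) a)"
| "sat \<sigma> i (WYst a) = (i = 0 \<or> sat \<sigma> (i - 1) a)"
| "sat \<sigma> i (Once a) = (\<exists>j. j \<le> i \<and> sat \<sigma> j a)"
| "sat \<sigma> i (Hist a) = (\<forall>j. j \<le> i \<longrightarrow> sat \<sigma> j a)"

fun fsize :: "ltl \<Rightarrow> nat" where
  "fsize (Prop p) = 1"
| "fsize (NProp p) = 1"
| "fsize (Or a b) = fsize a + fsize b + 1"
| "fsize (And a b) = fsize a + fsize b + 1"
| "fsize (Nxt a) = fsize a + 1"
| "fsize (WNxt a) = fsize a + 1"
| "fsize (Fin a) = fsize a + 1"
| "fsize (Glob a) = fsize a + 1"
| "fsize (Yst a) = fsize a + 1"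
| "fsize (WYst a) = fsize a + 1"
| "fsize (Once a) = fsize a + 1"
| "fsize (Hist a) = fsize a + 1"

fun atoms :: "ltl \<Rightarrow> nat set" where
  "atoms (Prop p) = {p}"
| "atoms (NProp p) = {p}"
| "atoms (Or a b) = atoms a \<union> atoms b"
| "atoms (And a b) = atoms a \<union> atoms b"
| "atoms (Nxt a) = atoms a"
| "atoms (WNxt a) = atoms a"
| "atoms (Fin a) = atoms a"
| "atoms (Glob a) = atoms a"
| "atoms (Yst a) = atoms a"
| "atoms (WYst a) = atoms a"
| "atoms (Once a) = atoms a"
| "atoms (Hist a) = atoms a"

fun tops :: "ltl \<Rightarrow> top set" where
  "tops (Prop p) = {}"
| "tops (NProp p) = {}"
| "tops (Or a b) = tops a \<union> tops b"
| "tops (And a b) = tops a \<union> tops b"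
| "tops (Nxt a) = insert OpX (tops a)"
| "tops (WNxt a) = insert OpWX (tops a)"
| "tops (Fin a) = insert OpF (tops a)"
| "tops (Glob a) = insert OpG (tops a)"
| "tops (Yst a) = insert OpY (tops a)"
| "tops (WYst a) = insert OpWY (tops a)"
| "tops (Once a) = insert OpO (tops a)"
| "tops (Hist a) = insert OpH (tops a)"

definition in_LTL :: "top set \<Rightarrow> nat set \<Rightarrow> ltl \<Rightarrow> bool" where
  "in_LTL S AP \<phi> \<longleftrightarrow> tops \<phi> \<subseteq> S \<and> atoms \<phi> \<subseteq> AP"

definition in_F_LTL :: "top set \<Rightarrow> nat set \<Rightarrow> ltl \<Rightarrow> bool" where
  "in_F_LTL S AP \<psi> \<longleftrightarrow> (\<exists>\<alpha>. \<psi> = Fin \<alpha> \<and> in_LTL S AP \<alpha>)"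

definition traces :: "nat set \<Rightarrow> nat set list set" where
  "traces AP = {\<sigma>. \<sigma> \<noteq> [] \<and> set \<sigma> \<subseteq> Pow AP}"

definition lang :: "nat set \<Rightarrow> ltl \<Rightarrow> nat set list set" where
  "lang AP \<phi> = {\<sigma> \<in> traces AP. sat \<sigma> 0 \<phi>}"

end

theory Submission
  imports Defs "HOL-Library.FuncSet"
begin

abbreviation past :: "top set" where "past \<equiv> {OpY, OpWY, OpO, OpH}"

fun subs :: "ltl \<Rightarrow> ltl set" where
  "subs (Prop p) = {Prop p}"
| "subs (NProp p) = {NProp p}"
| "subs (Or a b) = insert (Or a b) (subs a \<union> subs b)"
| "subs (And a b) = insert (And a b) (subs a \<union> subs b)"
| "subs (Nxt a) = insert (Nxt a) (subs a)"
| "subs (WNxt a) = insert (WNxt a) (subs a)"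
| "subs (Fin a) = insert (Fin a) (subs a)"
| "subs (Glob a) = insert (Glob a) (subs a)"
| "subs (Yst a) = insert (Yst a) (subs a)"
| "subs (WYst a) = insert (WYst a) (subs a)"
| "subs (Once a) = insert (Once a) (subs a)"
| "subs (Hist a) = insert (Hist a) (subs a)"

lemma subs_self: "a \<in> subs a"
  by (cases a) auto

lemma subs_finite: "finite (subs a)"
  by (induction a) auto

lemma subs_card: "card (subs a) \<le> fsize a"
proof (induction a)
  case (Or a b)
  have "card (subs (Or a b)) \<le> Suc (card (subs a \<union> subs b))"
    by (simp add: card_insert_le_m1 subs_finite card_insert_if)
  also have "\<dots> \<le> Suc (card (subs a) + card (subs b))"
    using card_Un_le by auto
  finally show ?case using Or by simp
next
  case (And a b)
  have "card (subs (And a b)) \<le> Suc (card (subs a \<union> subs b))"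
    by (simp add: card_insert_le_m1 subs_finite card_insert_if)
  also have "\<dots> \<le> Suc (card (subs a) + card (subs b))"
    using card_Un_le by auto
  finally show ?case using And by simp
qed (auto simp: subs_finite card_insert_if)

lemma past_pref:
  "tops a \<subseteq> past \<Longrightarrow> j < length u \<Longrightarrow> sat (u @ v) j a = sat u j a"
proof (induction a arbitrary: j)
  case (Once a)
  have ta: "tops a \<subseteq> past" using Once.prems by simp
  have "j' \<le> j \<Longrightarrow> sat (u @ v) j' a = sat u j' a" for j'
    using Once.IH[OF ta] Once.prems(2) by simp
  then show ?case by auto
next
  case (Hist a)
  have ta: "tops a \<subseteq> past" using Hist.prems by simp
  have "j' \<le> j \<Longrightarrow> sat (u @ v) j' a = sat u j' a" for j'
    using Hist.IH[OF ta] Hist.prems(2) by simp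
  then show ?case by auto
next
  case (Yst a)
  have ta: "tops a \<subseteq> past" using Yst.prems by simp
  show ?case using Yst.IH[OF ta, of "j - 1"] Yst.prems(2) by simp
next
  case (WYst a)
  have ta: "tops a \<subseteq> past" using WYst.prems by simp
  show ?case using WYst.IH[OF ta, of "j - 1"] WYst.prems(2) by simp
next
  case (Or a b)
  then show ?case by simp
next
  case (And a b)
  then show ?case by simp
qed (simp_all add: nth_append)

definition prof :: "nat set list \<Rightarrow> ltl \<Rightarrow> bool \<times> bool \<times> bool" where
  "prof u b = ((\<exists>t<length u. sat u t b), (\<forall>t<length u. sat u t b), sat u (length u - 1) b)"

lemma ex_split: "(\<exists>j\<le>(l::nat) + t. P j) = ((\<exists>j<l. P j) \<or> (\<exists>t'\<le>t. P (l + t')))"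
proof
  assume "\<exists>j\<le>l + t. P j"
  then obtain j where j: "j \<le> l + t" "P j" by blast
  show "(\<exists>j<l. P j) \<or> (\<exists>t'\<le>t. P (l + t'))"
  proof (cases "j < l")
    case True then show ?thesis using j by blast
  next
    case False
    then have "l + (j - l) = j" "j - l \<le> t" using j by arith+
    then show ?thesis using j by metis
  qed
next
  assume "(\<exists>j<l. P j) \<or> (\<exists>t'\<le>t. P (l + t'))"
  then show "\<exists>j\<le>l + t. P j"
  proof
    assume "\<exists>j<l. P j" then obtain j where "j < l" "P j" by blast
    then show ?thesis by (intro exI[of _ j]) simp
  next
    assume "\<exists>t'\<le>t. P (l + t')" then obtain t' where "t' \<le> t" "P (l + t')" by blast
    then show ?thesis by (intro exI[of _ "l + t'"]) simp
  qed
qed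

lemma all_split: "(\<forall>j\<le>(l::nat) + t. P j) = ((\<forall>j<l. P j) \<and> (\<forall>t'\<le>t. P (l + t')))"
  using ex_split[of l t "\<lambda>j. \<not> P j"] by blast

lemma past_suffix:
  assumes "tops a \<subseteq> past" "u \<noteq> []" "u' \<noteq> []" "\<forall>b\<in>subs a. prof u b = prof u' b"
    "t < length v"
  shows "sat (u @ v) (length u + t) a = sat (u' @ v) (length u' + t) a"
  using assms
proof (induction a arbitrary: t)
  case (Yst a)
  show ?case
  proof (cases t)
    case 0
    have "prof u a = prof u' a" using Yst.prems subs_self[of a] by simp
    then have "sat u (length u - 1) a = sat u' (length u' - 1) a" by (simp add: prof_def)
    moreover have "sat (u @ v) (length u - 1) a = sat u (length u - 1) a"
      using Yst.prems past_pref[of a "length u - 1" u v] by simp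
    moreover have "sat (u' @ v) (length u' - 1) a = sat u' (length u' - 1) a"
      using Yst.prems past_pref[of a "length u' - 1" u' v] by simp
    ultimately show ?thesis using 0 Yst.prems by simp
  next
    case (Suc t')
    then have "length u + t - 1 = length u + t'" "length u' + t - 1 = length u' + t'" by auto
    then show ?thesis using Yst Suc by simp
  qed
next
  case (WYst a)
  show ?case
  proof (cases t)
    case 0
    have "prof u a = prof u' a" using WYst.prems subs_self[of a] by simp
    then have "sat u (length u - 1) a = sat u' (length u' - 1) a" by (simp add: prof_def)
    moreover have "sat (u @ v) (length u - 1) a = sat u (length u - 1) a"
      using WYst.prems past_pref[of a "length u - 1" u v] by simp
    moreover have "sat (u' @ v) (length u' - 1) a = sat u' (length u' - 1) a"
      using WYst.prems past_pref[of a "length u' - 1" u' v] by simp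
    ultimately show ?thesis using 0 WYst.prems by simp
  next
    case (Suc t')
    then have "length u + t - 1 = length u + t'" "length u' + t - 1 = length u' + t'" by auto
    then show ?thesis using WYst Suc by simp
  qed
next
  case (Once a)
  have p: "prof u a = prof u' a" using Once.prems subs_self[of a] by simp
  have "sat (u @ v) (length u + t) (Once a) =
     ((\<exists>j<length u. sat (u @ v) j a) \<or> (\<exists>t'\<le>t. sat (u @ v) (length u + t') a))"
    by (simp add: ex_split)
  also have "\<dots> = ((\<exists>j<length u. sat u j a) \<or> (\<exists>t'\<le>t. sat (u @ v) (length u + t') a))"
    using past_pref[of a _ u v] Once.prems by auto
  also have "\<dots> = ((\<exists>j<length u'. sat u' j a) \<or> (\<exists>t'\<le>t. sat (u' @ v) (length u' + t') a))"
    using p Once.IH[of] Once.prems by (auto simp: prof_def)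
  also have "\<dots> = ((\<exists>j<length u'. sat (u' @ v) j a) \<or> (\<exists>t'\<le>t. sat (u' @ v) (length u' + t') a))"
    using past_pref[of a _ u' v] Once.prems by auto
  also have "\<dots> = sat (u' @ v) (length u' + t) (Once a)"
    by (simp add: ex_split)
  finally show ?case .
next
  case (Hist a)
  have p: "prof u a = prof u' a" using Hist.prems subs_self[of a] by simp
  have "sat (u @ v) (length u + t) (Hist a) =
     ((\<forall>j<length u. sat (u @ v) j a) \<and> (\<forall>t'\<le>t. sat (u @ v) (length u + t') a))"
    by (simp add: all_split)
  also have "\<dots> = ((\<forall>j<length u. sat u j a) \<and> (\<forall>t'\<le>t. sat (u @ v) (length u + t') a))"
    using past_pref[of a _ u v] Hist.prems by auto
  also have "\<dots> = ((\<forall>j<length u'. sat u' j a) \<and> (\<forall>t'\<le>t. sat (u' @ v) (length u' + t') a))"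
    using p Hist.IH[of] Hist.prems by (auto simp: prof_def)
  also have "\<dots> = ((\<forall>j<length u'. sat (u' @ v) j a) \<and> (\<forall>t'\<le>t. sat (u' @ v) (length u' + t') a))"
    using past_pref[of a _ u' v] Hist.prems by auto
  also have "\<dots> = sat (u' @ v) (length u' + t) (Hist a)"
    by (simp add: all_split)
  finally show ?case .
qed (simp_all add: nth_append)

lemma ex_split2: "(\<exists>j<(l::nat) + m. P j) = ((\<exists>j<l. P j) \<or> (\<exists>t<m. P (l + t)))"
proof
  assume "\<exists>j<l + m. P j"
  then obtain j where j: "j < l + m" "P j" by blast
  show "(\<exists>j<l. P j) \<or> (\<exists>t<m. P (l + t))"
  proof (cases "j < l")
    case True then show ?thesis using j by blast
  next
    case False
    then have "l + (j - l) = j" "j - l < m" using j by arith+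
    then show ?thesis using j by metis
  qed
next
  assume "(\<exists>j<l. P j) \<or> (\<exists>t<m. P (l + t))"
  then show "\<exists>j<l + m. P j"
  proof
    assume "\<exists>j<l. P j" then obtain j where "j < l" "P j" by blast
    then show ?thesis by (intro exI[of _ j]) simp
  next
    assume "\<exists>t<m. P (l + t)" then obtain t where "t < m" "P (l + t)" by blast
    then show ?thesis by (intro exI[of _ "l + t"]) simp
  qed
qed

lemma fin_split:
  assumes "tops a \<subseteq> past" "u \<noteq> []" "u' \<noteq> []" "\<forall>b\<in>subs a. prof u b = prof u' b"
  shows "sat (u @ v) 0 (Fin a) = sat (u' @ v) 0 (Fin a)"
proof -
  have gen: "sat (w @ v) 0 (Fin a) =
     ((\<exists>j<length w. sat w j a) \<or> (\<exists>t<length v. sat (w @ v) (length w + t) a))" for w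
  proof -
    have "sat (w @ v) 0 (Fin a) = (\<exists>j<length w + length v. sat (w @ v) j a)" by simp
    also have "\<dots> = ((\<exists>j<length w. sat (w @ v) j a) \<or> (\<exists>t<length v. sat (w @ v) (length w + t) a))"
      by (rule ex_split2)
    also have "\<dots> = ((\<exists>j<length w. sat w j a) \<or> (\<exists>t<length v. sat (w @ v) (length w + t) a))"
      using past_pref[OF assms(1), of _ w v] by auto
    finally show ?thesis .
  qed
  have "prof u a = prof u' a" using assms(4) subs_self[of a] by simp
  then have "(\<exists>j<length u. sat u j a) = (\<exists>j<length u'. sat u' j a)" by (simp add: prof_def)
  then show ?thesis unfolding gen using past_suffix[OF assms] by auto
qed

definition clause :: "nat \<Rightarrow> ltl" where
  "clause j = Or (Prop (2*j)) (Fin (Prop (2*j+1)))"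

fun conjs :: "nat \<Rightarrow> ltl" where
  "conjs 0 = clause 0"
| "conjs (Suc k) = And (clause (Suc k)) (conjs k)"

definition phi :: "nat \<Rightarrow> ltl" where
  "phi n = Fin (conjs (2*n - 1))"

lemma sat_conjs: "sat \<sigma> i (conjs k) = (\<forall>j\<le>k. sat \<sigma> i (clause j))"
  by (induction k) (auto simp: le_Suc_eq)

lemma conjs_size: "fsize (conjs k) = 5*k + 4"
  by (induction k) (auto simp: clause_def)

lemma conjs_tops: "tops (conjs k) = {OpF}"
  by (induction k) (auto simp: clause_def)

lemma conjs_atoms: "atoms (conjs k) \<subseteq> {..<2*k+2}"
  by (induction k) (auto simp: clause_def)

lemma sat_phi:
  assumes "n \<ge> 1"
  shows "sat \<sigma> 0 (phi n) = (\<exists>k<length \<sigma>. \<forall>j<2*n. 2*j \<in> \<sigma>!k \<or>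
           (\<exists>k'. k \<le> k' \<and> k' < length \<sigma> \<and> 2*j+1 \<in> \<sigma>!k'))"
proof -
  have "\<And>j. (j \<le> 2*n - 1) = (j < 2*n)" using assms by auto
  then show ?thesis by (simp add: phi_def sat_conjs clause_def)
qed

definition AA :: "nat \<Rightarrow> nat set \<Rightarrow> nat set" where
  "AA n x = x \<union> (\<lambda>i. n + i) ` ({..<n} - x)"

definition letter :: "nat \<Rightarrow> nat set \<Rightarrow> nat set" where
  "letter n x = (\<lambda>j. 2*j) ` ({..<2*n} - AA n x)"

definition vlet :: "nat \<Rightarrow> nat set \<Rightarrow> nat set" where
  "vlet n y = (\<lambda>j. 2*j+1) ` AA n y"

definition uu :: "nat \<Rightarrow> nat set list \<Rightarrow> nat set list" where
  "uu n xs = {} # map (letter n) xs"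

lemma AA_sub: "x \<subseteq> {..<n} \<Longrightarrow> AA n x \<subseteq> {..<2*n}"
  by (auto simp: AA_def)

lemma AA_inj: "x \<subseteq> {..<n} \<Longrightarrow> y \<subseteq> {..<n} \<Longrightarrow> AA n x \<subseteq> AA n y \<Longrightarrow> x = y"
proof (rule set_eqI)
  fix i assume x: "x \<subseteq> {..<n}" and y: "y \<subseteq> {..<n}" and s: "AA n x \<subseteq> AA n y"
  show "i \<in> x \<longleftrightarrow> i \<in> y"
  proof
    assume "i \<in> x" then have "i \<in> AA n y" using s by (auto simp: AA_def)
    then show "i \<in> y" using `i \<in> x` x by (auto simp: AA_def)
  next
    assume iy: "i \<in> y"
    show "i \<in> x"
    proof (rule ccontr)
      assume "i \<notin> x"
      then have "n + i \<in> AA n x" using iy y by (auto simp: AA_def)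
      then have "n + i \<in> AA n y" using s by auto
      then show False using iy y by (auto simp: AA_def)
    qed
  qed
qed

lemma AA_notall: "n \<ge> 1 \<Longrightarrow> y \<subseteq> {..<n} \<Longrightarrow> \<exists>j<2*n. j \<notin> AA n y"
proof (cases "0 \<in> y")
  case True
  assume "n \<ge> 1" "y \<subseteq> {..<n}"
  then show ?thesis using True by (intro exI[of _ n]) (auto simp: AA_def)
next
  case False
  assume "n \<ge> 1" "y \<subseteq> {..<n}"
  then show ?thesis using False by (intro exI[of _ 0]) (auto simp: AA_def)
qed

lemma member_iff:
  assumes n: "n \<ge> 1" and xs: "\<forall>x\<in>set xs. x \<subseteq> {..<n}" and y: "y \<subseteq> {..<n}"
  shows "sat (uu n xs @ [vlet n y]) 0 (phi n) = (y \<in> set xs)"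
proof -
  let ?s = "uu n xs @ [vlet n y]"
  have setS: "set ?s = insert {} (insert (vlet n y) (letter n ` set xs))"
    by (auto simp: uu_def)
  show ?thesis
  proof
    assume "sat ?s 0 (phi n)"
    then obtain k where k: "k < length ?s" and
      c: "\<forall>j<2*n. 2*j \<in> ?s!k \<or> (\<exists>k'. k \<le> k' \<and> k' < length ?s \<and> 2*j+1 \<in> ?s!k')"
      using sat_phi[OF n] by blast
    have q: "2*j+1 \<in> ?s!k' \<Longrightarrow> k' < length ?s \<Longrightarrow> j \<in> AA n y" for j k'
    proof -
      assume a: "2*j+1 \<in> ?s!k'" "k' < length ?s"
      from a(2) have "?s!k' \<in> set ?s" by (rule nth_mem)
      then show ?thesis using a(1) unfolding setS by (auto simp: letter_def vlet_def) presburger+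
    qed
    have c2: "\<forall>j<2*n. 2*j \<in> ?s!k \<or> j \<in> AA n y" using c q by blast
    have mem: "?s!k \<in> set ?s" by (rule nth_mem[OF k])
    obtain j where j: "j < 2*n" "j \<notin> AA n y" using AA_notall[OF n y] by blast
    have "2*j \<in> ?s!k" using c2 j by blast
    then have "?s!k \<noteq> {} \<and> ?s!k \<noteq> vlet n y" by (auto simp: vlet_def) presburger
    then obtain x where x: "x \<in> set xs" "?s!k = letter n x" using mem unfolding setS by auto
    have "AA n x \<subseteq> AA n y"
    proof
      fix i assume i: "i \<in> AA n x"
      then have "i < 2*n" using AA_sub[of x n] xs x by auto
      then have "2*i \<in> letter n x \<or> i \<in> AA n y" using c2 x by auto
      then show "i \<in> AA n y" using i by (auto simp: letter_def)
    qed
    then have "x = y" using AA_inj xs x y by blast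
    then show "y \<in> set xs" using x by simp
  next
    assume "y \<in> set xs"
    then obtain i where i: "i < length xs" "xs!i = y" by (auto simp: in_set_conv_nth)
    have len: "length ?s = length xs + 2" by (simp add: uu_def)
    have ski: "?s!(Suc i) = letter n y" using i by (simp add: uu_def nth_append)
    have sl: "?s!(length xs + 1) = vlet n y" by (simp add: uu_def nth_append)
    have "\<forall>j<2*n. 2*j \<in> ?s!(Suc i) \<or> (\<exists>k'. Suc i \<le> k' \<and> k' < length ?s \<and> 2*j+1 \<in> ?s!k')"
    proof (intro allI impI)
      fix j assume j: "j < 2*n"
      show "2*j \<in> ?s!(Suc i) \<or> (\<exists>k'. Suc i \<le> k' \<and> k' < length ?s \<and> 2*j+1 \<in> ?s!k')"
      proof (cases "j \<in> AA n y")
        case True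
        then have "2*j+1 \<in> ?s!(length xs + 1)" using sl by (simp add: vlet_def)
        then show ?thesis using i len by (intro disjI2 exI[of _ "length xs + 1"]) auto
      next
        case False
        then show ?thesis using ski j by (simp add: letter_def)
      qed
    qed
    then show "sat ?s 0 (phi n)" using sat_phi[OF n] len i by (intro iffD2[OF sat_phi[OF n]] exI[of _ "Suc i"]) auto
  qed
qed

definition lst :: "nat set set \<Rightarrow> nat set list" where
  "lst X = (SOME xs. set xs = X)"

lemma lst_set: "finite X \<Longrightarrow> set (lst X) = X"
  unfolding lst_def by (rule someI_ex) (rule finite_list)

lemma tr: assumes "\<forall>x\<in>set xs. x \<subseteq> {..<n}" "y \<subseteq> {..<n}"
  shows "uu n xs @ [vlet n y] \<in> traces {..<4*n}"
  using assms unfolding traces_def uu_def letter_def vlet_def AA_def by auto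

lemma lower:
  assumes n: "n \<ge> 1" and pa: "tops a \<subseteq> past"
    and eq: "\<forall>\<sigma>\<in>traces {..<4*n}. sat \<sigma> 0 (Fin a) = sat \<sigma> 0 (phi n)"
  shows "2^n \<le> 3 * fsize a"
proof -
  define D where "D = Pow (Pow {..<n::nat})"
  define h where "h X = restrict (prof (uu n (lst X))) (subs a)" for X
  have setl: "X \<in> D \<Longrightarrow> set (lst X) = X" for X
    by (rule lst_set) (auto simp: D_def intro: finite_subset)
  have key: "X \<in> D \<Longrightarrow> X' \<in> D \<Longrightarrow> h X = h X' \<Longrightarrow> X \<subseteq> X'" for X X'
  proof
    fix y assume X: "X \<in> D" and X': "X' \<in> D" and hh: "h X = h X'" and y: "y \<in> X"
    have ys: "y \<subseteq> {..<n}" using X y by (auto simp: D_def)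
    have xs: "\<forall>x\<in>set (lst X). x \<subseteq> {..<n}" using setl[OF X] X by (auto simp: D_def)
    have xs': "\<forall>x\<in>set (lst X'). x \<subseteq> {..<n}" using setl[OF X'] X' by (auto simp: D_def)
    have pr: "\<forall>b\<in>subs a. prof (uu n (lst X)) b = prof (uu n (lst X')) b"
    proof
      fix b assume "b \<in> subs a"
      then show "prof (uu n (lst X)) b = prof (uu n (lst X')) b"
        using fun_cong[OF hh, of b] by (simp add: h_def)
    qed
    have "sat (uu n (lst X) @ [vlet n y]) 0 (phi n)"
      using member_iff[OF n xs ys] setl[OF X] y by simp
    then have "sat (uu n (lst X) @ [vlet n y]) 0 (Fin a)" using eq tr[OF xs ys] by blast
    moreover have "sat (uu n (lst X) @ [vlet n y]) 0 (Fin a) = sat (uu n (lst X') @ [vlet n y]) 0 (Fin a)"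
      by (rule fin_split[OF pa _ _ pr]) (simp_all add: uu_def)
    ultimately have "sat (uu n (lst X') @ [vlet n y]) 0 (Fin a)" by simp
    then have "sat (uu n (lst X') @ [vlet n y]) 0 (phi n)" using eq tr[OF xs' ys] by blast
    then show "y \<in> X'" using member_iff[OF n xs' ys] setl[OF X'] by simp
  qed
  have inj: "inj_on h D"
    by (rule inj_onI) (metis key subset_antisym)
  have img: "h ` D \<subseteq> PiE (subs a) (\<lambda>_. UNIV)"
    by (auto simp: h_def)
  have "card D \<le> card (PiE (subs a) (\<lambda>_. UNIV :: (bool \<times> bool \<times> bool) set))"
    using card_inj_on_le[OF inj img] subs_finite by (simp add: finite_PiE)
  also have "\<dots> = 8 ^ card (subs a)"
    using subs_finite
    by (simp add: card_PiE UNIV_Times_UNIV[symmetric] card_cartesian_product del: UNIV_Times_UNIV)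
  also have "\<dots> \<le> 8 ^ fsize a" by (rule power_increasing) (auto simp: subs_card)
  also have "\<dots> = 2 ^ (3 * fsize a)" by (simp add: power_mult)
  finally have "(2::nat) ^ (2 ^ n) \<le> 2 ^ (3 * fsize a)"
    by (simp add: D_def card_Pow finite_Pow_iff)
  then show ?thesis by simp
qed

theorem theorem2:
  shows "\<exists>(AP :: nat \<Rightarrow> nat set) (L :: nat \<Rightarrow> nat set list set).
     (\<forall>n\<ge>1. finite (AP n) \<and> L n \<subseteq> traces (AP n)) \<and>
     (\<exists>(c::nat) (k::nat). \<forall>n\<ge>1. \<exists>\<phi>. in_LTL {OpF} (AP n) \<phi> \<and>
          lang (AP n) \<phi> = L n \<and> fsize \<phi> \<le> c * n ^ k + c) \<and>
     (\<exists>(c::real) (N::nat). c > 0 \<and> (\<forall>n\<ge>max 1 N. \<forall>\<psi>.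
          in_F_LTL {OpY, OpWY, OpO, OpH} (AP n) \<psi> \<and> lang (AP n) \<psi> = L n
          \<longrightarrow> 2 powr (c * real n) \<le> real (fsize \<psi>)))"
proof -
  have H1: "\<forall>n\<ge>1. finite {..<4*n} \<and> lang {..<4*n} (phi n) \<subseteq> traces {..<4*n}"
    by (auto simp: lang_def)
  have H2: "\<forall>n\<ge>1. \<exists>\<phi>. in_LTL {OpF} {..<4*n} \<phi> \<and>
          lang {..<4*n} \<phi> = lang {..<4*n} (phi n) \<and> fsize \<phi> \<le> 10 * n ^ 1 + 10"
  proof (intro allI impI)
    fix n :: nat assume n: "n \<ge> 1"
    have "atoms (conjs (2*n-1)) \<subseteq> {..<4*n}" using conjs_atoms[of "2*n-1"] n by auto
    moreover have "fsize (phi n) \<le> 10 * n ^ 1 + 10" using n by (simp add: phi_def conjs_size)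
    ultimately show "\<exists>\<phi>. in_LTL {OpF} {..<4*n} \<phi> \<and>
          lang {..<4*n} \<phi> = lang {..<4*n} (phi n) \<and> fsize \<phi> \<le> 10 * n ^ 1 + 10"
      by (intro exI[of _ "phi n"]) (auto simp: in_LTL_def phi_def conjs_tops)
  qed
  have H3: "\<exists>(c::real) (N::nat). c > 0 \<and> (\<forall>n\<ge>max 1 N. \<forall>\<psi>.
          in_F_LTL {OpY, OpWY, OpO, OpH} {..<4*n} \<psi> \<and> lang {..<4*n} \<psi> = lang {..<4*n} (phi n)
          \<longrightarrow> 2 powr (c * real n) \<le> real (fsize \<psi>))"
  proof (intro exI[of _ "1/2"] exI[of _ 4] conjI allI impI)
    fix n :: nat and \<psi> assume n: "n \<ge> max 1 4"
      and h: "in_F_LTL {OpY, OpWY, OpO, OpH} {..<4*n} \<psi> \<and> lang {..<4*n} \<psi> = lang {..<4*n} (phi n)"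
    then obtain a where a: "\<psi> = Fin a" "tops a \<subseteq> past"
      by (auto simp: in_F_LTL_def in_LTL_def)
    have eq: "\<forall>\<sigma>\<in>traces {..<4*n}. sat \<sigma> 0 (Fin a) = sat \<sigma> 0 (phi n)"
      using h a(1) unfolding lang_def by (auto simp: set_eq_iff)
    have b: "2^n \<le> 3 * fsize a" using lower[OF _ a(2) eq] n by simp
    define y where "y = 2 powr (1/2 * real n)"
    have y4: "4 \<le> y"
    proof -
      have "2 powr (2::real) \<le> y" unfolding y_def using n by (intro powr_mono) auto
      then show ?thesis by simp
    qed
    have yy: "y * y = 2 ^ n"
      unfolding y_def by (simp add: powr_add[symmetric] powr_realpow)
    have "3 * y \<le> y * y" using y4 by (intro mult_right_mono) auto
    also have "\<dots> \<le> 3 * real (fsize a)" using b yy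
      by (metis of_nat_le_iff of_nat_mult of_nat_numeral of_nat_power numeral_power_eq_of_nat_cancel_iff)
    finally have "y \<le> real (fsize a)" by simp
    then show "2 powr (1/2 * real n) \<le> real (fsize \<psi>)" using a(1) y_def by simp
  qed simp
  show ?thesis
    apply (rule exI[of _ "\<lambda>n. {..<4*n}"])
    apply (rule exI[of _ "\<lambda>n. lang {..<4*n} (phi n)"])
    using H1 H2 H3 by blast
qed

end
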